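(* Let $\mathcal{B}\subseteq\mathcal{P}(X)$ be a countable admissible algebra and let $\mathcal{D}\subseteq\mathcal{B}$. Then there is a set $A\subseteq X$ such that: (i) the algebra generated by $\mathcal{B}\cup\{A\}$ is admissible; (ii) for every $D\in\mathcal{D}$ we have $D_{|n}\subseteq A_{|n}$ for all but finitely many $n\in\omega$; (iii) $\mu(A)\le\sum_{D\in\mathcal{D}}\mu(D)$.
   Context: $\omega=\{0,1,2,\dots\}$, $2^\omega$ is the Cantor set, $\lambda$ is the usual product probability measure on $2^\omega$, and $\mathrm{Clop}(2^\omega)$ is the algebra of clopen subsets of $2^\omega$. Let $X=\omega\times 2^\omega$. For $B\subseteq X$ and $n\in\omega$, $B_{|n}=\{t\in 2^\omega:(n,t)\in B\}$. A set $B\subseteq X$ is admissible if $B_{|n}\in\mathrm{Clop}(2^\omega)$ for all $n\in\omega$ and $\lim_n\lambda(B_{|n})$ exists; in that case $\mu(B):=\lim_n\lambda(B_{|n})$. An algebra of subsets of $X$ is admissible if all its elements are admissible. *)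

theory Defs
  imports "HOL-Probability.Probability"
begin

type_synonym cantor = "nat \<Rightarrow> bool"
type_synonym X = "nat \<times> cantor"

definition cantor_top :: "cantor topology" where
  "cantor_top = product_topology (\<lambda>_::nat. discrete_topology (UNIV::bool set)) UNIV"

definition Clop :: "cantor set set" where
  "Clop = {S. openin cantor_top S \<and> closedin cantor_top S}"

definition lam_measure :: "cantor measure" where
  "lam_measure = PiM UNIV (\<lambda>_::nat. measure_pmf (bernoulli_pmf (1/2)))"

definition lam :: "cantor set \<Rightarrow> real" where
  "lam S = measure lam_measure S"

definition slice :: "X set \<Rightarrow> nat \<Rightarrow> cantor set" where
  "slice B n = {t. (n, t) \<in> B}"

definition admissible :: "X set \<Rightarrow> bool" where
  "admissible B \<longleftrightarrow> (\<forall>n. slice B n \<in> Clop) \<and> convergent (\<lambda>n. lam (slice B n))"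

definition mu :: "X set \<Rightarrow> real" where
  "mu B = lim (\<lambda>n. lam (slice B n))"

definition admissible_algebra :: "X set set \<Rightarrow> bool" where
  "admissible_algebra \<B> \<longleftrightarrow> algebra UNIV \<B> \<and> (\<forall>B\<in>\<B>. admissible B)"

definition gen_algebra :: "X set set \<Rightarrow> X set set" where
  "gen_algebra S = \<Inter>{M. algebra UNIV M \<and> S \<subseteq> M}"

end

theory Submission
  imports Defs
begin

lemma eb: "(euclidean :: bool topology) = discrete_topology UNIV"
  by (rule topology_eq[THEN iffD2]) (simp add: Topological_Spaces.open_discrete)

lemma ct: "cantor_top = euclidean"
  unfolding cantor_top_def eb[symmetric] by (rule euclidean_product_topology)

instance bool :: second_countable_topology
proof
  let ?B = "range (\<lambda>n::bool. {n})"
  have "\<And>S. generate_topology ?B (\<Union>x\<in>S. {x})"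
    by (intro generate_topology_Union) (auto intro: generate_topology.intros)
  then have "open = generate_topology ?B"
    by (auto intro!: ext Topological_Spaces.open_discrete)
  moreover have "countable ?B" by simp
  ultimately show "\<exists>B::bool set set. countable B \<and> open = generate_topology B" by blast
qed

lemma bb: "sets (borel :: bool measure) = UNIV"
  by (auto simp add: borel_def intro!: sigma_sets.Basic Topological_Spaces.open_discrete)

lemma slam: "sets lam_measure = sets borel"
  unfolding lam_measure_def
  apply (subst sets_PiM_equal_borel[symmetric])
  apply (rule sets_PiM_cong) apply simp apply (simp add: bb)
  done

lemma clop_meas: "S \<in> Clop \<Longrightarrow> S \<in> sets lam_measure"
  unfolding Clop_def slam ct by (auto simp: open_openin[symmetric])

lemma lam_prob: "prob_space lam_measure"
  unfolding lam_measure_def by (intro prob_space_PiM) (simp add: measure_pmf.prob_space_axioms)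

interpretation L: prob_space lam_measure by (rule lam_prob)

lemma slice_Int[simp]: "slice (S \<inter> T) n = slice S n \<inter> slice T n"
  and slice_Un[simp]: "slice (S \<union> T) n = slice S n \<union> slice T n"
  and slice_Diff[simp]: "slice (S - T) n = slice S n - slice T n"
  and slice_UNIV[simp]: "slice UNIV n = UNIV"
  and slice_empty[simp]: "slice {} n = {}"
  by (auto simp: slice_def)

lemma slice_Union: "slice (\<Union>F) n = (\<Union>D\<in>F. slice D n)"
  by (auto simp: slice_def)

lemma diag:
  fixes g :: "nat \<Rightarrow> nat \<Rightarrow> nat \<Rightarrow> real" and c :: "nat \<Rightarrow> nat \<Rightarrow> real" and L :: "nat \<Rightarrow> real"
  assumes g: "\<And>j m. (\<lambda>n. g j m n) \<longlonglongrightarrow> c j m" and c: "\<And>j. (\<lambda>m. c j m) \<longlonglongrightarrow> L j"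
  shows "\<exists>k. filterlim k at_top sequentially \<and> (\<forall>j. (\<lambda>n. g j (k n) n) \<longlonglongrightarrow> L j)"
proof -
  have "\<forall>m. \<exists>N. \<forall>n\<ge>N. \<forall>j\<in>{..m}. dist (g j m n) (c j m) < 1/(real m+1)"
  proof
    fix m
    have "\<forall>j\<in>{..m}. eventually (\<lambda>n. dist (g j m n) (c j m) < 1/(real m+1)) sequentially"
      using g tendstoD by (simp add: tendstoD)
    then have "eventually (\<lambda>n. \<forall>j\<in>{..m}. dist (g j m n) (c j m) < 1/(real m+1)) sequentially"
      by (intro eventually_ball_finite) auto
    then show "\<exists>N. \<forall>n\<ge>N. \<forall>j\<in>{..m}. dist (g j m n) (c j m) < 1/(real m+1)"
      by (simp add: eventually_sequentially)
  qed
  then obtain N where N: "\<And>m n j. n \<ge> N m \<Longrightarrow> j \<le> m \<Longrightarrow> dist (g j m n) (c j m) < 1/(real m+1)"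
    by (metis atMost_iff)
  define k where "k n = Max {m. m \<le> n \<and> N m \<le> n}" for n
  have fin: "finite {m. m \<le> n \<and> N m \<le> n}" for n by simp
  have kin: "k n \<le> n \<and> N (k n) \<le> n" if "n \<ge> max 0 (N 0)" for n
  proof -
    have "0 \<in> {m. m \<le> n \<and> N m \<le> n}" using that by simp
    then have "k n \<in> {m. m \<le> n \<and> N m \<le> n}" unfolding k_def
      by (intro Max_in[OF fin]) auto
    then show ?thesis by simp
  qed
  have kge: "M \<le> k n" if "n \<ge> max M (N M)" for n M
    unfolding k_def using that by (intro Max_ge[OF fin]) auto
  have klim: "filterlim k at_top sequentially"
    unfolding filterlim_at_top eventually_sequentially using kge by blast
  have "(\<lambda>n. g j (k n) n) \<longlonglongrightarrow> L j" for j
  proof (rule LIMSEQ_I)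
    fix r :: real assume r: "r > 0"
    then have "r/2 > 0" by simp
    from LIMSEQ_D[OF c this] obtain M1 where M1: "\<And>m. m \<ge> M1 \<Longrightarrow> norm (c j m - L j) < r/2"
      by blast
    obtain M2 where M2: "inverse (real (Suc M2)) < r/2" using reals_Archimedean[OF \<open>r/2>0\<close>] by blast
    define M where "M = max j (max M1 M2)"
    define n0 where "n0 = max (max M (N M)) (max 0 (N 0))"
    show "\<exists>no. \<forall>n\<ge>no. norm (g j (k n) n - L j) < r"
    proof (intro exI allI impI)
      fix n assume n: "n \<ge> n0"
      then have kM: "M \<le> k n" using kge[of M n] unfolding n0_def by simp
      have kn: "N (k n) \<le> n" using kin[of n] n unfolding n0_def by simp
      have "dist (g j (k n) n) (c j (k n)) < 1/(real (k n)+1)"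
        using N[OF kn] kM unfolding M_def by simp
      also have "1/(real (k n)+1) \<le> inverse (real (Suc M2))"
        using kM unfolding M_def by (simp add: field_simps)
      finally have a: "norm (g j (k n) n - c j (k n)) < r/2" using M2 by (simp add: dist_norm)
      have b: "norm (c j (k n) - L j) < r/2" using M1 kM unfolding M_def by simp
      have "norm (g j (k n) n - L j) \<le> norm (g j (k n) n - c j (k n)) + norm (c j (k n) - L j)"
        using norm_triangle_ineq[of "g j (k n) n - c j (k n)" "c j (k n) - L j"] by simp
      then show "norm (g j (k n) n - L j) < r" using a b by simp
    qed
  qed
  then show ?thesis using klim by blast
qed

lemma gen_alg: "algebra UNIV (gen_algebra S)"
  unfolding gen_algebra_def algebra_iff_Un by auto

lemma gen_sub: "algebra UNIV C \<Longrightarrow> S \<subseteq> C \<Longrightarrow> gen_algebra S \<subseteq> C"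
  unfolding gen_algebra_def by auto

lemma adm_meas: "admissible_algebra \<B> \<Longrightarrow> E \<in> \<B> \<Longrightarrow> slice E n \<in> sets lam_measure"
  unfolding admissible_algebra_def admissible_def using clop_meas by blast

lemma adm_lim: "admissible_algebra \<B> \<Longrightarrow> E \<in> \<B> \<Longrightarrow> (\<lambda>n. lam (slice E n)) \<longlonglongrightarrow> mu E"
  unfolding admissible_algebra_def admissible_def mu_def by (auto simp: convergent_LIMSEQ_iff)

lemma lam_nonneg: "0 \<le> lam S" unfolding lam_def by simp
lemma lam_le1: "lam S \<le> 1" unfolding lam_def by (rule L.prob_le_1)

lemma mu_nonneg: "admissible_algebra \<B> \<Longrightarrow> E \<in> \<B> \<Longrightarrow> 0 \<le> mu E"
  by (rule LIMSEQ_le_const[OF adm_lim]) (auto simp: lam_nonneg)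

lemma mu_le1: "admissible_algebra \<B> \<Longrightarrow> E \<in> \<B> \<Longrightarrow> mu E \<le> 1"
  by (rule LIMSEQ_le_const2[OF adm_lim]) (auto simp: lam_le1)

lemma mu_mono: "admissible_algebra \<B> \<Longrightarrow> E \<in> \<B> \<Longrightarrow> F \<in> \<B> \<Longrightarrow> E \<subseteq> F \<Longrightarrow> mu E \<le> mu F"
proof (rule LIMSEQ_le[OF adm_lim adm_lim], assumption+)
  assume a: "admissible_algebra \<B>" "E \<in> \<B>" "F \<in> \<B>" "E \<subseteq> F"
  have "lam (slice E n) \<le> lam (slice F n)" for n
    unfolding lam_def using a
    by (intro L.finite_measure_mono adm_meas) (auto simp: slice_def)
  then show "\<exists>N. \<forall>n\<ge>N. lam (slice E n) \<le> lam (slice F n)" by blast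
qed

lemma mu_union_le:
  assumes a: "admissible_algebra \<B>" and F: "finite F" "F \<subseteq> \<B>"
  shows "mu (\<Union>F) \<le> (\<Sum>D\<in>F. mu D)"
proof -
  have alg: "algebra UNIV \<B>" using a unfolding admissible_algebra_def by simp
  interpret algebra UNIV \<B> by (rule alg)
  have U: "\<Union>F \<in> \<B>" using finite_Union[OF F] .
  have "(\<lambda>n. \<Sum>D\<in>F. lam (slice D n)) \<longlonglongrightarrow> (\<Sum>D\<in>F. mu D)"
    using F by (intro tendsto_sum adm_lim[OF a]) auto
  moreover have "lam (slice (\<Union>F) n) \<le> (\<Sum>D\<in>F. lam (slice D n))" for n
    unfolding slice_Union lam_def
    using F by (intro L.finite_measure_subadditive_finite) (auto intro!: adm_meas[OF a])
  ultimately show ?thesis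
    by (intro LIMSEQ_le[OF adm_lim[OF a U]]) auto
qed

lemma lam_comb:
  assumes "P \<in> sets lam_measure" "Q \<in> sets lam_measure" "R \<in> sets lam_measure"
  shows "lam ((P \<inter> R) \<union> (Q - R)) = lam (P \<inter> R) + lam Q - lam (Q \<inter> R)"
proof -
  have "lam ((P \<inter> R) \<union> (Q - R)) = lam (P \<inter> R) + lam (Q - R)"
    unfolding lam_def using assms by (intro L.finite_measure_Union) auto
  moreover have "lam (Q - R) = lam Q - lam (Q \<inter> R)"
    unfolding lam_def using assms by (intro L.finite_measure_Diff') auto
  ultimately show ?thesis by simp
qed

lemma mu_empty: "mu {} = 0"
  unfolding mu_def lam_def by (simp add: limI)

theorem lemma2p4:
  fixes \<B> \<D> :: "X set set"
  assumes "countable \<B>"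
    and "admissible_algebra \<B>"
    and "\<D> \<subseteq> \<B>"
  shows "\<exists>A :: X set.
           admissible_algebra (gen_algebra (\<B> \<union> {A}))
         \<and> (\<forall>D\<in>\<D>. \<forall>\<^sub>F n in sequentially. slice D n \<subseteq> slice A n)
         \<and> ennreal (mu A) \<le> (\<Sum>\<^sub>\<infinity>D\<in>\<D>. ennreal (mu D))"
proof -
  have alg: "algebra UNIV \<B>" and adm: "\<And>B. B \<in> \<B> \<Longrightarrow> admissible B"
    using assms(2) unfolding admissible_algebra_def by auto
  interpret algebra UNIV \<B> by (rule alg)
  have emp: "{} \<in> \<B>" by simp
  have univ: "UNIV \<in> \<B>" by (rule top)
  define D' where "D' = insert {} \<D>"
  have D'ne: "D' \<noteq> {}" unfolding D'_def by simp
  have D'B: "D' \<subseteq> \<B>" unfolding D'_def using assms(3) emp by simp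
  have D'c: "countable D'" using countable_subset[OF D'B assms(1)] .
  define d where "d = from_nat_into D'"
  have drange: "range d = D'" unfolding d_def using range_from_nat_into[OF D'ne D'c] .
  have dB: "d i \<in> \<B>" for i using drange D'B by blast
  define U where "U m = (\<Union>i\<in>{..m}. d i)" for m
  have UB: "U m \<in> \<B>" for m unfolding U_def using dB by (intro finite_UN) auto
  have Bne: "\<B> \<noteq> {}" using emp by blast
  define b where "b = from_nat_into \<B>"
  have brange: "range b = \<B>" unfolding b_def using range_from_nat_into[OF Bne assms(1)] .
  have bB: "b j \<in> \<B>" for j using brange by blast
  define g where "g j m n = lam (slice (b j \<inter> U m) n)" for j m n
  define c where "c j m = mu (b j \<inter> U m)" for j m
  have bU: "b j \<inter> U m \<in> \<B>" for j m using bB UB by (rule Int)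
  have gc: "(\<lambda>n. g j m n) \<longlonglongrightarrow> c j m" for j m
    unfolding g_def c_def by (rule adm_lim[OF assms(2) bU])
  have cinc: "incseq (c j)" for j
  proof (rule incseq_SucI)
    fix m
    have "U m \<subseteq> U (Suc m)" unfolding U_def by (intro UN_mono) auto
    then show "c j m \<le> c j (Suc m)" unfolding c_def
      by (intro mu_mono[OF assms(2) bU bU]) auto
  qed
  have "\<exists>L. (\<lambda>m. c j m) \<longlonglongrightarrow> L" for j
  proof -
    have "\<forall>i. c j i \<le> 1" unfolding c_def using mu_le1[OF assms(2) bU] by blast
    from incseq_convergent[OF cinc this] show ?thesis by blast
  qed
  then obtain L where cL: "\<And>j. (\<lambda>m. c j m) \<longlonglongrightarrow> L j" by metis
  from diag[of g c L, OF gc cL] obtain k where klim: "filterlim k at_top sequentially"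
    and gL: "\<And>j. (\<lambda>n. g j (k n) n) \<longlonglongrightarrow> L j" by blast
  define A where "A = {(n,t). t \<in> slice (U (k n)) n}"
  have sA: "slice A n = slice (U (k n)) n" for n by (simp add: A_def slice_def)
  define C where "C = {(B1 \<inter> A) \<union> (B2 - A) | B1 B2. B1 \<in> \<B> \<and> B2 \<in> \<B>}"
  have Cmem: "(B1 \<inter> A) \<union> (B2 - A) \<in> C" if "B1 \<in> \<B>" "B2 \<in> \<B>" for B1 B2
    unfolding C_def using that by blast
  have Cdest: "\<exists>B1 B2. a = (B1 \<inter> A) \<union> (B2 - A) \<and> B1 \<in> \<B> \<and> B2 \<in> \<B>" if "a \<in> C" for a
    using that unfolding C_def by (rule CollectD)
  have Cc: "UNIV - a \<in> C" if ha: "a \<in> C" for a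
  proof -
    obtain B1 B2 where a: "a = (B1 \<inter> A) \<union> (B2 - A)" "B1 \<in> \<B>" "B2 \<in> \<B>"
      using Cdest[OF ha] by metis
    have "UNIV - a = ((UNIV - B1) \<inter> A) \<union> ((UNIV - B2) - A)" unfolding a(1) by auto
    moreover have "UNIV - B1 \<in> \<B>" "UNIV - B2 \<in> \<B>" using a by auto
    ultimately show ?thesis using Cmem by simp
  qed
  have Cu: "a \<union> a' \<in> C" if ha: "a \<in> C" and ha': "a' \<in> C" for a a'
  proof -
    obtain B1 B2 where a: "a = (B1 \<inter> A) \<union> (B2 - A)" "B1 \<in> \<B>" "B2 \<in> \<B>"
      using Cdest[OF ha] by metis
    obtain B1' B2' where a': "a' = (B1' \<inter> A) \<union> (B2' - A)" "B1' \<in> \<B>" "B2' \<in> \<B>"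
      using Cdest[OF ha'] by metis
    have "a \<union> a' = ((B1 \<union> B1') \<inter> A) \<union> ((B2 \<union> B2') - A)" unfolding a(1) a'(1) by auto
    moreover have "B1 \<union> B1' \<in> \<B>" "B2 \<union> B2' \<in> \<B>" using a a' by auto
    ultimately show ?thesis using Cmem by simp
  qed
  have C0: "{} \<in> C" using Cmem[OF emp emp] by simp
  have algC: "algebra UNIV C"
    unfolding algebra_iff_Un
  proof (intro conjI)
    show "C \<subseteq> Pow UNIV" by simp
    show "{} \<in> C" by (rule C0)
    show "\<forall>a\<in>C. UNIV - a \<in> C" using Cc by simp
    show "\<forall>a\<in>C. \<forall>b\<in>C. a \<union> b \<in> C" using Cu by simp
  qed
  have BAC: "\<B> \<union> {A} \<subseteq> C"
  proof
    fix x assume "x \<in> \<B> \<union> {A}"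
    then show "x \<in> C"
    proof
      assume x: "x \<in> \<B>"
      have "x = (x \<inter> A) \<union> (x - A)" by blast
      then show ?thesis using Cmem[OF x x] by simp
    next
      assume "x \<in> {A}"
      then have x: "x = A" by simp
      have "A = (UNIV \<inter> A) \<union> ({} - A)" by simp
      then show ?thesis using Cmem[OF univ emp] x by simp
    qed
  qed
  have genC: "gen_algebra (\<B> \<union> {A}) \<subseteq> C" by (rule gen_sub[OF algC BAC])
  have admC: "admissible E" if hE: "E \<in> C" for E
  proof -
    obtain B1 B2 where E: "E = (B1 \<inter> A) \<union> (B2 - A)" "B1 \<in> \<B>" "B2 \<in> \<B>"
      using Cdest[OF hE] by metis
    obtain j1 where j1: "b j1 = B1" using brange E(2) by blast
    obtain j2 where j2: "b j2 = B2" using brange E(3) by blast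
    have sE: "slice E n = (slice B1 n \<inter> slice (U (k n)) n) \<union> (slice B2 n - slice (U (k n)) n)" for n
      by (simp add: E sA)
    have "slice E n = slice ((B1 \<inter> U (k n)) \<union> (B2 - U (k n))) n" for n by (simp add: sE)
    moreover have "(B1 \<inter> U (k n)) \<union> (B2 - U (k n)) \<in> \<B>" for n using E UB by auto
    ultimately have clop: "slice E n \<in> Clop" for n
    proof -
      assume h: "\<And>n. slice E n = slice (B1 \<inter> U (k n) \<union> (B2 - U (k n))) n"
        "\<And>n. B1 \<inter> U (k n) \<union> (B2 - U (k n)) \<in> \<B>"
      have "admissible (B1 \<inter> U (k n) \<union> (B2 - U (k n)))" by (rule adm[OF h(2)])
      then show ?thesis unfolding admissible_def h(1) by simp
    qed
    have eq: "lam (slice E n) = g j1 (k n) n + lam (slice B2 n) - g j2 (k n) n" for n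
      unfolding sE g_def j1 j2 slice_Int
      by (rule lam_comb) (auto intro!: adm_meas[OF assms(2)] E UB)
    have "(\<lambda>n. lam (slice E n)) \<longlonglongrightarrow> L j1 + mu B2 - L j2"
      unfolding eq by (intro tendsto_intros gL adm_lim[OF assms(2)] E)
    then show ?thesis unfolding admissible_def using clop by (auto simp: convergent_def)
  qed
  have part1: "admissible_algebra (gen_algebra (\<B> \<union> {A}))"
    unfolding admissible_algebra_def using gen_alg genC admC by blast
  have part2: "\<forall>D\<in>\<D>. \<forall>\<^sub>F n in sequentially. slice D n \<subseteq> slice A n"
  proof
    fix D assume "D \<in> \<D>"
    then have "D \<in> range d" unfolding drange D'_def by simp
    then obtain i where i: "D = d i" by blast
    have "eventually (\<lambda>n. i \<le> k n) sequentially" using klim filterlim_at_top by blast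
    then show "\<forall>\<^sub>F n in sequentially. slice D n \<subseteq> slice A n"
    proof (rule eventually_mono)
      fix n assume "i \<le> k n"
      then have "D \<subseteq> U (k n)" unfolding U_def i by auto
      then show "slice D n \<subseteq> slice A n" unfolding sA by (auto simp: slice_def)
    qed
  qed
  obtain j0 where j0: "b j0 = UNIV" using brange univ by blast
  have "(\<lambda>n. lam (slice A n)) \<longlonglongrightarrow> L j0" using gL[of j0] unfolding g_def j0 sA by simp
  then have muA: "mu A = L j0" unfolding mu_def by (rule limI)
  let ?S = "(\<Sum>\<^sub>\<infinity>D\<in>\<D>. ennreal (mu D))"
  have bound: "ennreal (c j0 m) \<le> ?S" for m
  proof -
    have fin: "finite (d ` {..m})" by simp
    have sub: "d ` {..m} \<subseteq> \<B>" using dB by auto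
    have "c j0 m = mu (\<Union>(d ` {..m}))" unfolding c_def j0 U_def by simp
    also have "\<dots> \<le> (\<Sum>D\<in>d ` {..m}. mu D)" by (rule mu_union_le[OF assms(2) fin sub])
    finally have "ennreal (c j0 m) \<le> ennreal (\<Sum>D\<in>d ` {..m}. mu D)" by (rule ennreal_leI)
    also have "\<dots> = (\<Sum>D\<in>d ` {..m}. ennreal (mu D))"
      using mu_nonneg[OF assms(2)] sub by (intro sum_ennreal[symmetric]) auto
    also have "\<dots> = (\<Sum>\<^sub>\<infinity>D\<in>d ` {..m}. ennreal (mu D))" using fin by simp
    also have "\<dots> \<le> ?S"
    proof (rule infsum_mono_neutral)
      show "(\<lambda>D. ennreal (mu D)) summable_on d ` {..m}" by (rule nonneg_summable_on_complete) simp
      show "(\<lambda>D. ennreal (mu D)) summable_on \<D>" by (rule nonneg_summable_on_complete) simp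
      fix x assume "x \<in> d ` {..m} - \<D>"
      then have "x = {}" using drange unfolding D'_def by blast
      then show "ennreal (mu x) \<le> 0" by (simp add: mu_empty)
    qed auto
    finally show ?thesis .
  qed
  have "(\<lambda>m. ennreal (c j0 m)) \<longlonglongrightarrow> ennreal (L j0)" by (intro tendsto_ennrealI cL)
  then have "ennreal (L j0) \<le> ?S" by (rule LIMSEQ_le_const2) (use bound in blast)
  then have "ennreal (mu A) \<le> ?S" using muA by simp
  then show ?thesis using part1 part2 by blast
qed

end
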